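(* Let $\mathcal{Z}\subset\mathbb{R}^n$ be closed and $f:\mathbb{R}^n\times\mathcal{Z}\to\mathbb{R}^n$ continuous. Then the set-valued map $z\mapsto\hat f(z):=f(z,P_\mathcal{Z}(z))=\{f(z,p):p\in P_\mathcal{Z}(z)\}$ is locally bounded and outer semicontinuous. Furthermore, if $\mathcal{Z}$ is $\alpha$-prox-regular for some $\alpha>0$, then $\hat f$ is single-valued and continuous on $\mathcal{Z}+\tfrac{1}{2\alpha}\operatorname{int}\mathbb{B}$.
   Context: $P_\mathcal{Z}(z):=\{\tilde z\in\mathcal{Z}:\|z-\tilde z\|=\inf_{y\in\mathcal{Z}}\|z-y\|\}$. $\operatorname{int}\mathbb{B}$ is the open unit ball. A Clarke regular closed set $\mathcal{Z}$ (i.e., $x\mapsto T_x\mathcal{Z}$ inner semicontinuous, with $T_x\mathcal{Z}$ the tangent cone and $N_x\mathcal{Z}$ its polar) is $\alpha$-prox-regular if for every $x\in\mathcal{Z}$ and every $\eta\in N_x\mathcal{Z}$, $\langle\eta,y-x\rangle\le\alpha\|\eta\|\|y-x\|^2$ for all $y\in\mathcal{Z}$. *)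

theory Defs
  imports "HOL-Analysis.Analysis"
begin

definition proj_set :: "('a::euclidean_space) set \<Rightarrow> 'a \<Rightarrow> 'a set" where
  "proj_set Z z = {p \<in> Z. norm (z - p) = infdist z Z}"

definition tangent_cone :: "('a::euclidean_space) set \<Rightarrow> 'a \<Rightarrow> 'a set" where
  "tangent_cone Z x = {v. \<exists>t u. (\<forall>k. t k > 0 \<and> x + t k *\<^sub>R u k \<in> Z)
                              \<and> t \<longlonglongrightarrow> 0 \<and> u \<longlonglongrightarrow> v}"

definition normal_cone :: "('a::euclidean_space) set \<Rightarrow> 'a \<Rightarrow> 'a set" where
  "normal_cone Z x = {\<eta>. \<forall>v \<in> tangent_cone Z x. \<eta> \<bullet> v \<le> 0}"

definition inner_semicontinuous_on :: "'a::metric_space set \<Rightarrow> ('a \<Rightarrow> 'b::metric_space set) \<Rightarrow> bool" where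
  "inner_semicontinuous_on S M \<longleftrightarrow>
     (\<forall>x \<in> S. \<forall>v \<in> M x. \<forall>e > 0. \<exists>d > 0. \<forall>y \<in> S. dist y x < d \<longrightarrow> (\<exists>w \<in> M y. dist w v < e))"

definition clarke_regular :: "('a::euclidean_space) set \<Rightarrow> bool" where
  "clarke_regular Z \<longleftrightarrow> closed Z \<and> inner_semicontinuous_on Z (tangent_cone Z)"

definition prox_regular :: "real \<Rightarrow> ('a::euclidean_space) set \<Rightarrow> bool" where
  "prox_regular \<alpha> Z \<longleftrightarrow> clarke_regular Z \<and>
     (\<forall>x \<in> Z. \<forall>\<eta> \<in> normal_cone Z x. \<forall>y \<in> Z.
        \<eta> \<bullet> (y - x) \<le> \<alpha> * norm \<eta> * (norm (y - x))\<^sup>2)"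

definition locally_bounded :: "('a::metric_space \<Rightarrow> 'b::metric_space set) \<Rightarrow> bool" where
  "locally_bounded M \<longleftrightarrow> (\<forall>x. \<exists>e > 0. bounded (\<Union>y \<in> ball x e. M y))"

definition outer_semicontinuous :: "('a::metric_space \<Rightarrow> 'b::metric_space set) \<Rightarrow> bool" where
  "outer_semicontinuous M \<longleftrightarrow>
     (\<forall>x y xs ys. xs \<longlonglongrightarrow> x \<longrightarrow> ys \<longlonglongrightarrow> y \<longrightarrow> (\<forall>i. ys i \<in> M (xs i)) \<longrightarrow> y \<in> M x)"

end

theory Submission
  imports Defs
begin

lemma proj_nonempty:
  fixes Z :: "'a::euclidean_space set"
  assumes "closed Z" "Z \<noteq> {}"
  shows "\<exists>p. p \<in> proj_set Z z"
proof -
  obtain p where "p \<in> Z" "infdist z Z = dist z p" using infdist_attains_inf[OF assms] by blast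
  then show ?thesis unfolding proj_set_def by (auto simp: dist_norm)
qed

lemma proj_normal:
  fixes Z :: "'a::euclidean_space set"
  assumes "p \<in> proj_set Z z"
  shows "z - p \<in> normal_cone Z p"
  unfolding normal_cone_def
proof (clarify)
  fix v assume "v \<in> tangent_cone Z p"
  then obtain t u where tu: "\<And>k. t k > 0" "\<And>k. p + t k *\<^sub>R u k \<in> Z" "t \<longlonglongrightarrow> 0" "u \<longlonglongrightarrow> v"
    unfolding tangent_cone_def by blast
  have pz: "norm (z - p) = infdist z Z" using assms by (simp add: proj_set_def)
  have ineq: "2 * ((z - p) \<bullet> u k) \<le> t k * (norm (u k))\<^sup>2" for k
  proof -
    have "norm (z - p) \<le> norm (z - (p + t k *\<^sub>R u k))"
      using infdist_le[OF tu(2)[of k], of z] pz by (simp add: dist_norm)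
    hence A: "(norm (z - p))\<^sup>2 \<le> (norm (z - (p + t k *\<^sub>R u k)))\<^sup>2"
      by (simp add: power_mono)
    have B: "(norm (z - (p + t k *\<^sub>R u k)))\<^sup>2 = (norm (z - p))\<^sup>2 - t k * (2 * ((z - p) \<bullet> u k)) + t k * (t k * (norm (u k))\<^sup>2)"
      unfolding power2_norm_eq_inner by (simp add: inner_diff_left inner_diff_right inner_add_left inner_add_right algebra_simps power2_eq_square inner_commute)
    have "t k * (2 * ((z - p) \<bullet> u k)) \<le> t k * (t k * (norm (u k))\<^sup>2)"
      using A B by linarith
    thus ?thesis using tu(1)[of k] by simp
  qed
  have l1: "(\<lambda>k. 2 * ((z - p) \<bullet> u k)) \<longlonglongrightarrow> 2 * ((z - p) \<bullet> v)"
    by (intro tendsto_intros tu(4))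
  have l2: "(\<lambda>k. t k * (norm (u k))\<^sup>2) \<longlonglongrightarrow> 0 * (norm v)\<^sup>2"
    by (intro tendsto_intros tu)
  have "2 * ((z - p) \<bullet> v) \<le> 0 * (norm v)\<^sup>2"
    using LIMSEQ_le[OF l1 l2] ineq by blast
  thus "(z - p) \<bullet> v \<le> 0" by simp
qed

lemma proj_lip:
  fixes Z :: "'a::euclidean_space set"
  assumes pr: "prox_regular \<alpha> Z" and a: "\<alpha> > 0"
    and p1: "p1 \<in> proj_set Z z1" and p2: "p2 \<in> proj_set Z z2"
  shows "(1 - \<alpha> * (infdist z1 Z + infdist z2 Z)) * norm (p1 - p2) \<le> norm (z1 - z2)"
proof -
  have Z1: "p1 \<in> Z" "norm (z1 - p1) = infdist z1 Z" using p1 by (auto simp: proj_set_def)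
  have Z2: "p2 \<in> Z" "norm (z2 - p2) = infdist z2 Z" using p2 by (auto simp: proj_set_def)
  have h: "\<forall>x \<in> Z. \<forall>\<eta> \<in> normal_cone Z x. \<forall>y \<in> Z. \<eta> \<bullet> (y - x) \<le> \<alpha> * norm \<eta> * (norm (y - x))\<^sup>2"
    using pr by (simp add: prox_regular_def)
  have i1: "(z1 - p1) \<bullet> (p2 - p1) \<le> \<alpha> * infdist z1 Z * (norm (p1 - p2))\<^sup>2"
    using h Z1 Z2 proj_normal[OF p1] by (metis norm_minus_commute)
  have i2: "(z2 - p2) \<bullet> (p1 - p2) \<le> \<alpha> * infdist z2 Z * (norm (p1 - p2))\<^sup>2"
    using h Z1 Z2 proj_normal[OF p2] by metis
  have "(z1 - p1) \<bullet> (p2 - p1) + (z2 - p2) \<bullet> (p1 - p2) = (norm (p1 - p2))\<^sup>2 - (z1 - z2) \<bullet> (p1 - p2)"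
    by (simp add: power2_norm_eq_inner inner_diff_left inner_diff_right algebra_simps)
  hence "(norm (p1 - p2))\<^sup>2 - \<alpha> * (infdist z1 Z + infdist z2 Z) * (norm (p1 - p2))\<^sup>2 \<le> (z1 - z2) \<bullet> (p1 - p2)"
    using i1 i2 by (simp add: algebra_simps)
  also have "\<dots> \<le> norm (z1 - z2) * norm (p1 - p2)" by (rule norm_cauchy_schwarz)
  finally have "((1 - \<alpha> * (infdist z1 Z + infdist z2 Z)) * norm (p1 - p2)) * norm (p1 - p2) \<le> norm (z1 - z2) * norm (p1 - p2)"
    by (simp add: power2_eq_square algebra_simps)
  thus ?thesis
    by (cases "p1 = p2") (auto simp: mult_le_cancel_right)
qed

lemma graph_compact:
  fixes Z :: "'a::euclidean_space set"
  assumes Z: "closed Z" and K: "compact K"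
  shows "compact {(y, p). y \<in> K \<and> p \<in> proj_set Z y}"
proof (cases "Z = {}")
  case True
  then show ?thesis by (simp add: proj_set_def)
next
  case False
  then obtain z0 where z0: "z0 \<in> Z" by blast
  obtain B where B: "\<And>y. y \<in> K \<Longrightarrow> norm y \<le> B"
    using compact_imp_bounded[OF K] bounded_iff by blast
  have sub: "{(y, p). y \<in> K \<and> p \<in> proj_set Z y} \<subseteq> cball 0 B \<times> cball 0 (2 * B + norm z0)"
  proof (rule subsetI)
    fix yp assume "yp \<in> {(y, p). y \<in> K \<and> p \<in> proj_set Z y}"
    then obtain y p where yp: "yp = (y, p)" and y: "y \<in> K" and p: "p \<in> proj_set Z y" by auto
    have "norm (y - p) = infdist y Z" using p by (simp add: proj_set_def)
    also have "\<dots> \<le> dist y z0" by (rule infdist_le[OF z0])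
    also have "\<dots> \<le> norm y + norm z0" by (simp add: dist_norm norm_triangle_ineq4)
    finally have "norm (y - p) \<le> norm y + norm z0" .
    moreover have "norm p \<le> norm y + norm (y - p)"
      by (metis add.commute diff_add_cancel norm_triangle_ineq4 norm_minus_commute diff_diff_eq2 norm_triangle_sub)
    ultimately show "yp \<in> cball 0 B \<times> cball 0 (2 * B + norm z0)"
      using B[OF y] yp by auto
  qed
  have eq: "{(y, p). y \<in> K \<and> p \<in> proj_set Z y} = (K \<times> Z) \<inter> {yp. norm (fst yp - snd yp) = infdist (fst yp) Z}"
    by (auto simp: proj_set_def)
  have cl: "closed {yp. norm (fst yp - snd yp) = infdist (fst yp) Z}"
    by (intro closed_Collect_eq continuous_intros)
  have "closed {(y, p). y \<in> K \<and> p \<in> proj_set Z y}"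
    unfolding eq by (intro closed_Int closed_Times compact_imp_closed K Z cl)
  moreover have "bounded {(y, p). y \<in> K \<and> p \<in> proj_set Z y}"
    by (rule bounded_subset[OF bounded_Times[OF bounded_cball bounded_cball] sub])
  ultimately show ?thesis by (simp add: compact_eq_bounded_closed)
qed

theorem lemma3p1:
  fixes Z :: "(real ^ 'n) set"
    and f :: "real ^ 'n \<Rightarrow> real ^ 'n \<Rightarrow> real ^ 'n"
  assumes "closed Z"
    and "continuous_on (UNIV \<times> Z) (\<lambda>(z, p). f z p)"
  shows "locally_bounded (\<lambda>z. (\<lambda>p. f z p) ` proj_set Z z)
       \<and> outer_semicontinuous (\<lambda>z. (\<lambda>p. f z p) ` proj_set Z z)
       \<and> (\<forall>\<alpha> > 0. prox_regular \<alpha> Z \<longrightarrow>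
            ((\<forall>z \<in> (\<Union>x \<in> Z. ball x (1 / (2 * \<alpha>))). \<exists>!y. y \<in> (\<lambda>p. f z p) ` proj_set Z z)
             \<and> continuous_on (\<Union>x \<in> Z. ball x (1 / (2 * \<alpha>)))
                 (\<lambda>z. THE y. y \<in> (\<lambda>p. f z p) ` proj_set Z z)))"
proof -
  note Z = assms(1)
  define F where "F = (\<lambda>(z, p). f z p)"
  have Fc: "continuous_on (UNIV \<times> Z) F" using assms(2) by (simp add: F_def)
  define G where "G = (\<lambda>K. {(y, p). y \<in> K \<and> p \<in> proj_set Z y})"
  have GZ: "G K \<subseteq> UNIV \<times> Z" for K by (auto simp: G_def proj_set_def)
  have LB: "locally_bounded (\<lambda>z. (\<lambda>p. f z p) ` proj_set Z z)"
    unfolding locally_bounded_def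
  proof
    fix x :: "real ^ 'n"
    have "compact (F ` G (cball x 1))"
      by (rule compact_continuous_image[OF continuous_on_subset[OF Fc GZ]])
        (unfold G_def, rule graph_compact[OF Z compact_cball])
    moreover have "(\<Union>y \<in> ball x 1. (\<lambda>p. f y p) ` proj_set Z y) \<subseteq> F ` G (cball x 1)"
      by (force simp: G_def F_def)
    ultimately show "\<exists>e>0. bounded (\<Union>y \<in> ball x e. (\<lambda>p. f y p) ` proj_set Z y)"
      by (intro exI[of _ 1]) (auto intro: bounded_subset compact_imp_bounded)
  qed
  have OS: "outer_semicontinuous (\<lambda>z. (\<lambda>p. f z p) ` proj_set Z z)"
    unfolding outer_semicontinuous_def
  proof (intro allI impI)
    fix x y :: "real ^ 'n" and xs ys :: "nat \<Rightarrow> real ^ 'n"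
    assume xs: "xs \<longlonglongrightarrow> x" and ys: "ys \<longlonglongrightarrow> y" and M: "\<forall>i. ys i \<in> (\<lambda>p. f (xs i) p) ` proj_set Z (xs i)"
    have ex: "\<forall>i. \<exists>q. q \<in> proj_set Z (xs i) \<and> ys i = f (xs i) q" using M by blast
    obtain p where p0: "\<forall>i. p i \<in> proj_set Z (xs i) \<and> ys i = f (xs i) (p i)"
      using choice[OF ex] by blast
    hence p: "\<And>i. p i \<in> proj_set Z (xs i)" "\<And>i. ys i = f (xs i) (p i)" by auto
    define K where "K = insert x (range xs)"
    have "compact (G K)" unfolding G_def K_def
      by (rule graph_compact[OF Z compact_sequence_with_limit[OF xs]])
    hence sc: "seq_compact (G K)" by (rule compact_imp_seq_compact)
    have inG: "\<forall>i. (xs i, p i) \<in> G K" using p by (auto simp: G_def K_def)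
    obtain l r where l: "l \<in> G K" and r: "strict_mono r" and lim: "((\<lambda>i. (xs i, p i)) \<circ> r) \<longlonglongrightarrow> l"
      using seq_compactE[OF sc inG] by blast
    obtain a b where ab: "l = (a, b)" by fastforce
    have "(\<lambda>i. fst (((\<lambda>i. (xs i, p i)) \<circ> r) i)) \<longlonglongrightarrow> fst l" by (intro tendsto_fst lim)
    hence "(xs \<circ> r) \<longlonglongrightarrow> a" using ab by (simp add: o_def)
    moreover have "(xs \<circ> r) \<longlonglongrightarrow> x" by (rule LIMSEQ_subseq_LIMSEQ[OF xs r])
    ultimately have ax: "a = x" using LIMSEQ_unique by blast
    have bp: "b \<in> proj_set Z x" using l ab ax by (simp add: G_def)
    have "(\<lambda>i. F (((\<lambda>i. (xs i, p i)) \<circ> r) i)) \<longlonglongrightarrow> F l"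
      using GZ l p(1) by (intro continuous_on_tendsto_compose[OF Fc lim]) (auto simp: proj_set_def)
    hence "(ys \<circ> r) \<longlonglongrightarrow> f x b" using ab ax p(2) by (simp add: F_def o_def)
    moreover have "(ys \<circ> r) \<longlonglongrightarrow> y" by (rule LIMSEQ_subseq_LIMSEQ[OF ys r])
    ultimately have "y = f x b" using LIMSEQ_unique by blast
    thus "y \<in> (\<lambda>p. f x p) ` proj_set Z x" using bp by blast
  qed
  have PR: "((\<forall>z \<in> (\<Union>x \<in> Z. ball x (1 / (2 * \<alpha>))). \<exists>!y. y \<in> (\<lambda>p. f z p) ` proj_set Z z)
             \<and> continuous_on (\<Union>x \<in> Z. ball x (1 / (2 * \<alpha>)))
                 (\<lambda>z. THE y. y \<in> (\<lambda>p. f z p) ` proj_set Z z))"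
    if a: "\<alpha> > 0" and pr: "prox_regular \<alpha> Z" for \<alpha>
  proof -
    define U where "U = (\<Union>x \<in> Z. ball x (1 / (2 * \<alpha>)))"
    have dU: "2 * \<alpha> * infdist z Z < 1" if zU: "z \<in> U" for z
    proof -
      obtain x where x: "x \<in> Z" "dist x z < 1 / (2 * \<alpha>)" using zU by (auto simp: U_def)
      have "infdist z Z \<le> dist z x" by (rule infdist_le[OF x(1)])
      hence "infdist z Z < 1 / (2 * \<alpha>)" using x(2) by (simp add: dist_commute)
      thus ?thesis using a by (simp add: field_simps)
    qed
    define P where "P = (\<lambda>z. THE p. p \<in> proj_set Z z)"
    have Psing: "proj_set Z z = {P z}" if zU: "z \<in> U" for z
    proof -
      have "Z \<noteq> {}" using zU by (auto simp: U_def)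
      then obtain p where p: "p \<in> proj_set Z z" using proj_nonempty[OF Z] by blast
      have uq: "q = p" if q: "q \<in> proj_set Z z" for q
      proof -
        have "(1 - \<alpha> * (infdist z Z + infdist z Z)) * norm (q - p) \<le> norm (z - z)"
          by (rule proj_lip[OF pr a q p])
        moreover have "1 - \<alpha> * (infdist z Z + infdist z Z) > 0" using dU[OF \<open>z \<in> U\<close>] by simp
        ultimately show ?thesis
          by (simp add: mult_le_0_iff)
      qed
      have "P z = p" unfolding P_def using p uq by blast
      thus ?thesis using p uq by blast
    qed
    have Th: "(THE y. y \<in> (\<lambda>p. f z p) ` proj_set Z z) = f z (P z)" if "z \<in> U" for z
      using Psing[OF that] by simp
    have Pc: "continuous_on U P"
      unfolding continuous_on_iff
    proof (intro ballI allI impI)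
      fix z e assume z: "z \<in> U" and e: "(e::real) > 0"
      define c where "c = 1 - 2 * \<alpha> * infdist z Z"
      have c: "c > 0" using dU[OF z] by (simp add: c_def)
      define d where "d = min (c / (2 * \<alpha>)) (e * c / 2)"
      have d: "d > 0" using c e a by (simp add: d_def)
      show "\<exists>d>0. \<forall>z'\<in>U. dist z' z < d \<longrightarrow> dist (P z') (P z) < e"
      proof (intro exI[of _ d] conjI ballI impI d)
        fix z' assume z': "z' \<in> U" and dz: "dist z' z < d"
        have "infdist z' Z \<le> infdist z Z + dist z' z" by (rule infdist_triangle)
        hence "infdist z' Z \<le> infdist z Z + d" using dz by linarith
        hence "\<alpha> * infdist z' Z \<le> \<alpha> * (infdist z Z + d)"
          using a by (intro mult_left_mono) auto
        hence "\<alpha> * infdist z' Z \<le> \<alpha> * infdist z Z + \<alpha> * d"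
          by (simp add: distrib_left)
        moreover have "\<alpha> * d \<le> c / 2"
        proof -
          have "d \<le> c / (2 * \<alpha>)" by (simp add: d_def)
          hence "\<alpha> * d \<le> \<alpha> * (c / (2 * \<alpha>))" using a by (intro mult_left_mono) auto
          also have "\<alpha> * (c / (2 * \<alpha>)) = c / 2" using a by simp
          finally show ?thesis .
        qed
        ultimately have k: "1 - \<alpha> * (infdist z' Z + infdist z Z) \<ge> c / 2"
          unfolding c_def by (simp only: distrib_left mult.assoc) (simp add: field_simps)
        have "(1 - \<alpha> * (infdist z' Z + infdist z Z)) * norm (P z' - P z) \<le> norm (z' - z)"
          using proj_lip[OF pr a, of "P z'" z' "P z" z] Psing[OF z] Psing[OF z'] by simp
        hence "c / 2 * norm (P z' - P z) \<le> norm (z' - z)"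
          using mult_right_mono[OF k norm_ge_zero, of "P z' - P z"] by linarith
        also have "\<dots> < e * c / 2" using dz d_def by (simp add: dist_norm)
        finally have "c * norm (P z' - P z) < c * e" by (simp add: mult.commute)
        thus "dist (P z') (P z) < e" using c by (simp add: dist_norm)
      qed
    qed
    have PZ: "(\<lambda>z. (z, P z)) ` U \<subseteq> UNIV \<times> Z"
    proof -
      have "P z \<in> Z" if "z \<in> U" for z
      proof -
        have "P z \<in> proj_set Z z" using Psing[OF that] by blast
        thus "P z \<in> Z" by (simp add: proj_set_def)
      qed
      thus ?thesis by blast
    qed
    have "continuous_on U (\<lambda>z. (z, P z))" by (intro continuous_on_Pair continuous_on_id Pc)
    hence "continuous_on U (\<lambda>z. F (z, P z))"
      by (rule continuous_on_compose2[OF Fc _ PZ])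
    hence "continuous_on U (\<lambda>z. THE y. y \<in> (\<lambda>p. f z p) ` proj_set Z z)"
      by (rule continuous_on_cong[THEN iffD1, rotated 2]) (auto simp: Th F_def)
    moreover have "\<forall>z \<in> U. \<exists>!y. y \<in> (\<lambda>p. f z p) ` proj_set Z z"
    proof
      fix z assume "z \<in> U"
      hence "(\<lambda>p. f z p) ` proj_set Z z = {f z (P z)}" using Psing by simp
      thus "\<exists>!y. y \<in> (\<lambda>p. f z p) ` proj_set Z z" by simp
    qed
    ultimately show ?thesis unfolding U_def by blast
  qed
  show ?thesis using LB OS PR by blast
qed

end
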